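(* Let $G$ be a countable infinite discrete group, $X$ an infinite compact Hausdorff space and $\beta: G\curvearrowright X$ a minimal, topologically free continuous action with no $G$-invariant regular Borel probability measure and with dynamical comparison. Let $Y$ be a compact Hausdorff space and $\alpha: G\curvearrowright X\times Y$ the action $\alpha_g(x,y)=(\beta_g(x),y)$; let $\pi_Y: X\times Y\to Y$ be the projection. Then: (i) every $G$-invariant closed subset $M\subset X\times Y$ satisfies $M=X\times\pi_Y(M)$; (ii) $\alpha$ is essentially free.
   Context: Subequivalence for $\beta$: for closed $F$ and open $O$ in $X$, $F\prec O$ if there exist a finite open cover $\mathcal{U}$ of $F$ and $s_U\in G$ with the sets $\beta_{s_U}(U)$ pairwise disjoint subsets of $O$; for open $V$, $V\prec O$ means $F\prec O$ for all closed $F\subset V$. Dynamical comparison: $V\prec O$ for every open $V$ and nonempty open $O$ with $\mu(V)<\mu(O)$ for all $G$-invariant regular Borel probability measures $\mu$. Topologically free: fixed point sets of non-identity elements have empty interior. Essentially free: for every closed $G$-invariant subset $Z$ the set of points of $Z$ with trivial stabilizer is dense in $Z$. *)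

theory Defs
  imports "HOL-Probability.Probability" "HOL-Algebra.Group"
begin

definition cont_action :: "('g, 'm) monoid_scheme \<Rightarrow> ('g \<Rightarrow> 'a::topological_space \<Rightarrow> 'a) \<Rightarrow> bool" where
  "cont_action G act \<longleftrightarrow>
     (\<forall>g\<in>carrier G. continuous_on UNIV (act g)) \<and>
     act \<one>\<^bsub>G\<^esub> = id \<and>
     (\<forall>g\<in>carrier G. \<forall>h\<in>carrier G. act (g \<otimes>\<^bsub>G\<^esub> h) = act g \<circ> act h)"

definition invariant_set :: "('g, 'm) monoid_scheme \<Rightarrow> ('g \<Rightarrow> 'a \<Rightarrow> 'a) \<Rightarrow> 'a set \<Rightarrow> bool" where
  "invariant_set G act A \<longleftrightarrow> (\<forall>g\<in>carrier G. act g ` A \<subseteq> A)"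

definition minimal_action :: "('g, 'm) monoid_scheme \<Rightarrow> ('g \<Rightarrow> 'a::topological_space \<Rightarrow> 'a) \<Rightarrow> bool" where
  "minimal_action G act \<longleftrightarrow>
     (\<forall>Z. closed Z \<and> invariant_set G act Z \<longrightarrow> Z = {} \<or> Z = UNIV)"

definition topologically_free :: "('g, 'm) monoid_scheme \<Rightarrow> ('g \<Rightarrow> 'a::topological_space \<Rightarrow> 'a) \<Rightarrow> bool" where
  "topologically_free G act \<longleftrightarrow>
     (\<forall>g\<in>carrier G. g \<noteq> \<one>\<^bsub>G\<^esub> \<longrightarrow> interior {x. act g x = x} = {})"

definition trivial_stabilizer :: "('g, 'm) monoid_scheme \<Rightarrow> ('g \<Rightarrow> 'a \<Rightarrow> 'a) \<Rightarrow> 'a \<Rightarrow> bool" where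
  "trivial_stabilizer G act x \<longleftrightarrow> (\<forall>g\<in>carrier G. act g x = x \<longrightarrow> g = \<one>\<^bsub>G\<^esub>)"

definition essentially_free :: "('g, 'm) monoid_scheme \<Rightarrow> ('g \<Rightarrow> 'a::topological_space \<Rightarrow> 'a) \<Rightarrow> bool" where
  "essentially_free G act \<longleftrightarrow>
     (\<forall>Z. closed Z \<and> invariant_set G act Z \<longrightarrow>
          Z \<subseteq> closure {x\<in>Z. trivial_stabilizer G act x})"

definition regular_borel :: "'a::topological_space measure \<Rightarrow> bool" where
  "regular_borel M \<longleftrightarrow> sets M = sets borel \<and>
     (\<forall>A\<in>sets M.
        emeasure M A = (SUP K\<in>{K. compact K \<and> K \<subseteq> A}. emeasure M K) \<and>
        emeasure M A = (INF U\<in>{U. open U \<and> A \<subseteq> U}. emeasure M U))"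

definition invariant_measure :: "('g, 'm) monoid_scheme \<Rightarrow> ('g \<Rightarrow> 'a::topological_space \<Rightarrow> 'a) \<Rightarrow> 'a measure \<Rightarrow> bool" where
  "invariant_measure G act M \<longleftrightarrow>
     prob_space M \<and> regular_borel M \<and>
     (\<forall>g\<in>carrier G. \<forall>A\<in>sets M. emeasure M (act g -` A) = emeasure M A)"

definition subequiv_closed :: "('g, 'm) monoid_scheme \<Rightarrow> ('g \<Rightarrow> 'a::topological_space \<Rightarrow> 'a) \<Rightarrow> 'a set \<Rightarrow> 'a set \<Rightarrow> bool" where
  "subequiv_closed G act F W \<longleftrightarrow>
     (\<exists>UU s. finite UU \<and> (\<forall>U\<in>UU. open U) \<and> F \<subseteq> \<Union>UU \<and>
            (\<forall>U\<in>UU. s U \<in> carrier G \<and> act (s U) ` U \<subseteq> W) \<and>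
            (\<forall>U\<in>UU. \<forall>U'\<in>UU. U \<noteq> U' \<longrightarrow> act (s U) ` U \<inter> act (s U') ` U' = {}))"

definition subequiv_open :: "('g, 'm) monoid_scheme \<Rightarrow> ('g \<Rightarrow> 'a::topological_space \<Rightarrow> 'a) \<Rightarrow> 'a set \<Rightarrow> 'a set \<Rightarrow> bool" where
  "subequiv_open G act V W \<longleftrightarrow> (\<forall>F. closed F \<and> F \<subseteq> V \<longrightarrow> subequiv_closed G act F W)"

definition dynamical_comparison :: "('g, 'm) monoid_scheme \<Rightarrow> ('g \<Rightarrow> 'a::topological_space \<Rightarrow> 'a) \<Rightarrow> bool" where
  "dynamical_comparison G act \<longleftrightarrow>
     (\<forall>V W. open V \<and> open W \<and> W \<noteq> {} \<and>
        (\<forall>M. invariant_measure G act M \<longrightarrow> measure M V < measure M W)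
        \<longrightarrow> subequiv_open G act V W)"

end

theory Submission
  imports Defs
begin

lemma free_dense:
  fixes G :: "('g, 'm) monoid_scheme"
    and \<beta> :: "'g \<Rightarrow> 'x::t2_space \<Rightarrow> 'x"
  assumes "countable (carrier G)"
    and "compact (UNIV :: 'x set)"
    and "cont_action G \<beta>"
    and "topologically_free G \<beta>"
  shows "closure {x. trivial_stabilizer G \<beta> x} = UNIV"
proof -
  define \<G> where "\<G> = (\<lambda>g. {x. \<beta> g x = x}) ` (carrier G - {\<one>\<^bsub>G\<^esub>})"
  have H: "Hausdorff_space (euclidean :: 'x topology)"
    unfolding Hausdorff_space_def
  proof (intro allI impI)
    fix x y :: 'x assume "x \<in> topspace euclidean \<and> y \<in> topspace euclidean \<and> x \<noteq> y"
    then have "x \<noteq> y" by blast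
    then obtain U V where "open U" "open V" "x \<in> U" "y \<in> V" "U \<inter> V = {}"
      by (rule hausdorff[elim_format]) blast
    then show "\<exists>U V. openin euclidean U \<and> openin euclidean V \<and> x \<in> U \<and> y \<in> V \<and> disjnt U V"
      unfolding disjnt_def by auto
  qed
  have C: "compact_space (euclidean :: 'x topology)"
    using assms(2) by (simp add: compact_space_def)
  have "euclidean interior_of \<Union>\<G> = {}"
  proof (rule Baire_category_alt)
    show "completely_metrizable_space (euclidean :: 'x topology) \<or> locally_compact_space (euclidean :: 'x topology) \<and> regular_space (euclidean :: 'x topology)"
      using compact_imp_locally_compact_space[OF C] compact_Hausdorff_imp_regular_space[OF C H] by blast
    show "countable \<G>" unfolding \<G>_def using assms(1) by simp
    fix T assume "T \<in> \<G>"
    then obtain g where g: "g \<in> carrier G" "g \<noteq> \<one>\<^bsub>G\<^esub>" "T = {x. \<beta> g x = x}"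
      unfolding \<G>_def by auto
    have "continuous_on UNIV (\<beta> g)" using assms(3) g unfolding cont_action_def by auto
    then have "closed T" using g(3) by (auto intro!: closed_Collect_eq continuous_on_id)
    moreover have "interior T = {}" using assms(4) g unfolding topologically_free_def by auto
    ultimately show "closedin euclidean T \<and> euclidean interior_of T = {}"
      by simp
  qed
  then have "interior (\<Union>\<G>) = {}" by simp
  moreover have "{x. trivial_stabilizer G \<beta> x} = - \<Union>\<G>"
    unfolding \<G>_def trivial_stabilizer_def by auto
  ultimately show ?thesis by (simp add: closure_interior)
qed

theorem proposition5p1:
  fixes G :: "('g, 'm) monoid_scheme"
    and \<beta> :: "'g \<Rightarrow> 'x::t2_space \<Rightarrow> 'x"
  assumes "group G"
    and "countable (carrier G)" and "infinite (carrier G)"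
    and "compact (UNIV :: 'x set)" and "infinite (UNIV :: 'x set)"
    and "compact (UNIV :: 'y::t2_space set)"
    and "cont_action G \<beta>"
    and "minimal_action G \<beta>"
    and "topologically_free G \<beta>"
    and "\<not> (\<exists>M. invariant_measure G \<beta> M)"
    and "dynamical_comparison G \<beta>"
  shows "(\<forall>M :: ('x \<times> 'y) set. closed M \<and> invariant_set G (\<lambda>g (x, y). (\<beta> g x, y)) M
            \<longrightarrow> M = UNIV \<times> snd ` M)
       \<and> essentially_free G (\<lambda>g (x, y :: 'y). (\<beta> g x, y))"
proof -
  have part1: "M = UNIV \<times> snd ` M"
    if M: "closed M" "invariant_set G (\<lambda>g (x, y). (\<beta> g x, y)) M" for M :: "('x \<times> 'y) set"
  proof
    show "M \<subseteq> UNIV \<times> snd ` M" by force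
    show "UNIV \<times> snd ` M \<subseteq> M"
    proof
      fix p assume "p \<in> (UNIV :: 'x set) \<times> snd ` M"
      then obtain x x0 y where p: "p = (x, y)" and xy: "(x0, y) \<in> M" by force
      define Z where "Z = (\<lambda>x. (x, y)) -` M"
      have "closed Z" unfolding Z_def
        by (rule continuous_closed_vimage[OF M(1)]) (auto intro!: continuous_intros)
      moreover have "invariant_set G \<beta> Z"
        using M(2) unfolding invariant_set_def Z_def by fastforce
      ultimately have "Z = {} \<or> Z = UNIV" using assms(8) unfolding minimal_action_def by blast
      moreover have "x0 \<in> Z" using xy Z_def by simp
      ultimately have "x \<in> Z" by auto
      then show "p \<in> M" unfolding Z_def p by simp
    qed
  qed
  have part2: "essentially_free G (\<lambda>g (x, y :: 'y). (\<beta> g x, y))"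
    unfolding essentially_free_def
  proof clarify
    fix Z :: "('x \<times> 'y) set" and x y
    assume Z: "closed Z" "invariant_set G (\<lambda>g (x, y). (\<beta> g x, y)) Z" and xy: "(x, y) \<in> Z"
    have ZE: "Z = UNIV \<times> snd ` Z" using part1 Z by blast
    define F where "F = {x. trivial_stabilizer G \<beta> x}"
    have ZI: "(a, b) \<in> Z" if "b \<in> snd ` Z" for a b
    proof -
      have "(a, b) \<in> UNIV \<times> snd ` Z" using that by simp
      then show ?thesis using equalityD2[OF ZE] by (rule subsetD[rotated])
    qed
    have sub: "F \<times> snd ` Z \<subseteq> {z\<in>Z. trivial_stabilizer G (\<lambda>g (x, y :: 'y). (\<beta> g x, y)) z}"
    proof
      fix p assume "p \<in> F \<times> snd ` Z"
      then obtain a b where p: "p = (a, b)" and a: "a \<in> F" and b: "b \<in> snd ` Z" by blast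
      have "(a, b) \<in> Z" using ZI[OF b] .
      moreover have "trivial_stabilizer G (\<lambda>g (x, y :: 'y). (\<beta> g x, y)) (a, b)"
        using a unfolding F_def trivial_stabilizer_def by auto
      ultimately show "p \<in> {z\<in>Z. trivial_stabilizer G (\<lambda>g (x, y :: 'y). (\<beta> g x, y)) z}"
        using p by simp
    qed
    have cF: "closure F = UNIV" unfolding F_def
      using free_dense[OF assms(2) assms(4) assms(7) assms(9)] .
    have y1: "y \<in> snd ` Z" using xy by (rule image_eqI[rotated]) simp
    have y2: "y \<in> closure (snd ` Z)" by (rule closure_subset[THEN subsetD, OF y1])
    have "(x, y) \<in> closure F \<times> closure (snd ` Z)" unfolding cF using y2 by (rule mem_Sigma_iff[THEN iffD2, OF conjI[OF UNIV_I]])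
    then have "(x, y) \<in> closure (F \<times> snd ` Z)" by (simp only: closure_Times)
    then show "(x, y) \<in> closure {z\<in>Z. trivial_stabilizer G (\<lambda>g (x, y :: 'y). (\<beta> g x, y)) z}"
      by (rule closure_mono[OF sub, THEN subsetD])
  qed
  show ?thesis using part1 part2 by blast
qed

end
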